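(* Assume Case 4 holds and let $\mathcal{I}_f^{AR}=[l_1,l_1+l_2]$. Then for every $n\ge1$, $Q^n$ contains the term $z^{\gamma_n}w^{d^n}$, $(\gamma_n,d^n)$ is a vertex of $N(Q^n)$, and for every $l\in\mathcal{I}_f^{AR}$, $$w_l(Q^n)=w_l(z^{\gamma_n}w^{d^n})=\gamma_n+l\,d^n.$$
   Context: Let $f(z,w)=(p(z),q(z,w))$ be a holomorphic skew product germ at the origin of $\mathbb{C}^2$ with $f(0,0)=(0,0)$, where $p(z)=a_\delta z^\delta+O(z^{\delta+1})$ with $a_\delta\neq0$ and integer $\delta\ge1$, and $q(z,w)=\sum_{i+j\ge1}b_{ij}z^iw^j$ is not identically zero. For $n\ge1$ write $f^n=(p^n,Q^n)$. For a nonzero germ $g=\sum g_{ij}z^iw^j$, say $g$ contains $z^aw^b$ if $g_{ab}\neq0$, and for real $l>0$ let $w_l(g)=\min\{i+lj: g_{ij}\neq0\}$. The Newton polygon $N(g)$ is the convex hull of $\bigcup_{g_{ij}\neq0}\{(x,y):x\ge i,\ y\ge j\}$. Let $(n_1,m_1),\dots,(n_s,m_s)$ be the vertices of $N(q)$ with $n_1<\cdots<n_s$, $m_1>\cdots>m_s$; for $1\le k\le s-1$ let $T_k$ be the $y$-intercept of the line through $(n_k,m_k)$ and $(n_{k+1},m_{k+1})$. Case 4 means: $s>2$ and $T_k\le\delta\le T_{k-1}$ for some $2\le k\le s-1$; for this $k$ set $(\gamma,d)=(n_k,m_k)$, $l_1=\frac{n_k-n_{k-1}}{m_{k-1}-m_k}$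 and $l_2$ defined by $l_1+l_2=\frac{n_{k+1}-n_k}{m_k-m_{k+1}}$. Define $\gamma_n=\gamma(\delta^{n-1}+\delta^{n-2}d+\cdots+d^{n-1})$. *)

theory Defs
  imports "HOL-Analysis.Analysis"
begin

text \<open>Formal power series in two variables z, w, represented by their coefficient
  functions: g i j is the coefficient of z^i w^j.\<close>
type_synonym bps = "nat \<Rightarrow> nat \<Rightarrow> complex"

definition bmul :: "bps \<Rightarrow> bps \<Rightarrow> bps" where
  "bmul A B = (\<lambda>a b. \<Sum>i\<le>a. \<Sum>j\<le>b. A i j * B (a - i) (b - j))"

fun bpow :: "bps \<Rightarrow> nat \<Rightarrow> bps" where
  "bpow A 0 = (\<lambda>a b. if a = 0 \<and> b = 0 then 1 else 0)"
| "bpow A (Suc n) = bmul A (bpow A n)"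

text \<open>Substitution g(P(z,w), Q(z,w)) for series P, Q without constant term
  (terms with i + j > a + b do not contribute to the coefficient of z^a w^b).\<close>
definition bcomp :: "bps \<Rightarrow> bps \<Rightarrow> bps \<Rightarrow> bps" where
  "bcomp g P Q = (\<lambda>a b. \<Sum>i\<le>a+b. \<Sum>j\<le>a+b. g i j * bmul (bpow P i) (bpow Q j) a b)"

definition zvar :: bps where "zvar = (\<lambda>a b. if a = 1 \<and> b = 0 then 1 else 0)"
definition wvar :: bps where "wvar = (\<lambda>a b. if a = 0 \<and> b = 1 then 1 else 0)"

definition embed_z :: "(nat \<Rightarrow> complex) \<Rightarrow> bps" where
  "embed_z p = (\<lambda>a b. if b = 0 then p a else 0)"

text \<open>skew_iter p q n = f^n = (p^n, Q^n) for f(z,w) = (p(z), q(z,w)); f^(n+1) = f o f^n.\<close>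
fun skew_iter :: "(nat \<Rightarrow> complex) \<Rightarrow> bps \<Rightarrow> nat \<Rightarrow> bps \<times> bps" where
  "skew_iter p q 0 = (zvar, wvar)"
| "skew_iter p q (Suc n) =
     (let (P, Q) = skew_iter p q n in (bcomp (embed_z p) P Q, bcomp q P Q))"

text \<open>Convergence (holomorphic germ): Cauchy-type coefficient bounds on a polydisc.\<close>
definition conv_germ1 :: "(nat \<Rightarrow> complex) \<Rightarrow> bool" where
  "conv_germ1 c \<longleftrightarrow> (\<exists>\<rho>>0. \<exists>M. \<forall>i. norm (c i) * \<rho> ^ i \<le> M)"

definition conv_germ2 :: "bps \<Rightarrow> bool" where
  "conv_germ2 c \<longleftrightarrow> (\<exists>\<rho>>0. \<exists>M. \<forall>i j. norm (c i j) * \<rho> ^ (i + j) \<le> M)"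

definition newton_polygon :: "bps \<Rightarrow> (real \<times> real) set" where
  "newton_polygon g = convex hull (\<Union>{ {(x, y). real i \<le> x \<and> real j \<le> y} | i j. g i j \<noteq> 0 })"

definition weight :: "real \<Rightarrow> bps \<Rightarrow> real" where
  "weight l g = Inf {real i + l * real j | i j. g i j \<noteq> 0}"

definition monom :: "nat \<Rightarrow> nat \<Rightarrow> bps" where
  "monom a b = (\<lambda>i j. if i = a \<and> j = b then 1 else 0)"

definition yint :: "real \<Rightarrow> real \<Rightarrow> real \<Rightarrow> real \<Rightarrow> real" where
  "yint x1 y1 x2 y2 = y1 - x1 * (y2 - y1) / (x2 - x1)"

end

theory Submission
  imports Defs
begin

definition phi :: "real \<Rightarrow> nat \<Rightarrow> nat \<Rightarrow> real" where "phi l i j = real i + l * real j"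
definition lb :: "real \<Rightarrow> bps \<Rightarrow> real \<Rightarrow> bool" where
  "lb l A \<alpha> \<longleftrightarrow> (\<forall>i j. A i j \<noteq> 0 \<longrightarrow> \<alpha> \<le> phi l i j)"
definition ulb :: "real \<Rightarrow> bps \<Rightarrow> real \<Rightarrow> nat \<Rightarrow> nat \<Rightarrow> bool" where
  "ulb l A \<alpha> a b \<longleftrightarrow> phi l a b = \<alpha> \<and> (\<forall>i j. A i j \<noteq> 0 \<longrightarrow> (i = a \<and> j = b) \<or> \<alpha> < phi l i j)"

lemma ulb_lb: "ulb l A \<alpha> a b \<Longrightarrow> lb l A \<alpha>"
  unfolding ulb_def lb_def by force

lemma sum_nz: "sum f S \<noteq> 0 \<Longrightarrow> \<exists>x\<in>S. f x \<noteq> (0::complex)"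
  by (meson sum.neutral)

lemma bmul_nz: "bmul A B a b \<noteq> 0 \<Longrightarrow> \<exists>i\<le>a. \<exists>j\<le>b. A i j \<noteq> 0 \<and> B (a-i) (b-j) \<noteq> 0"
  unfolding bmul_def by (fastforce dest!: sum_nz)

lemma phi_split: "i \<le> a \<Longrightarrow> j \<le> b \<Longrightarrow> phi l a b = phi l i j + phi l (a-i) (b-j)"
  unfolding phi_def by (simp add: of_nat_diff algebra_simps)

lemma phi_add: "phi l (a+c) (b+e) = phi l a b + phi l c e"
  unfolding phi_def by (simp add: algebra_simps)

lemma lb_mul: "lb l A \<alpha> \<Longrightarrow> lb l B \<beta> \<Longrightarrow> lb l (bmul A B) (\<alpha>+\<beta>)"
  unfolding lb_def
proof (intro allI impI)
  fix a b assume hA: "\<forall>i j. A i j \<noteq> 0 \<longrightarrow> \<alpha> \<le> phi l i j" and hB: "\<forall>i j. B i j \<noteq> 0 \<longrightarrow> \<beta> \<le> phi l i j"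
    and "bmul A B a b \<noteq> 0"
  then obtain i j where ij: "i \<le> a" "j \<le> b" "A i j \<noteq> 0" "B (a-i) (b-j) \<noteq> 0" using bmul_nz by blast
  show "\<alpha> + \<beta> \<le> phi l a b" using hA hB ij phi_split[OF ij(1,2)] by (smt (verit))
qed

lemma sum2_delta:
  assumes "finite S" "finite T" "i0 \<in> S" "j0 \<in> T"
  shows "(\<Sum>i\<in>S. \<Sum>j\<in>T. if i = i0 \<and> j = j0 then c else 0) = (c::complex)"
proof -
  have "(\<Sum>i\<in>S. \<Sum>j\<in>T. if i = i0 \<and> j = j0 then c else 0) = (\<Sum>i\<in>S. if i = i0 then c else 0)"
  proof (intro sum.cong refl)
    fix i assume "i \<in> S"
    show "(\<Sum>j\<in>T. if i = i0 \<and> j = j0 then c else 0) = (if i = i0 then c else 0)"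
    proof (cases "i = i0")
      case True then show ?thesis using assms(2,4) by simp
    qed simp
  qed
  also have "\<dots> = c" using assms(1,3) by simp
  finally show ?thesis .
qed

lemma ulb_mul:
  assumes A: "ulb l A \<alpha> a1 b1" and B: "ulb l B \<beta> a2 b2"
  shows "ulb l (bmul A B) (\<alpha>+\<beta>) (a1+a2) (b1+b2) \<and> bmul A B (a1+a2) (b1+b2) = A a1 b1 * B a2 b2"
proof -
  have key: "i = a1 \<and> j = b1" if "i \<le> a" "j \<le> b" "A i j \<noteq> 0" "B (a-i) (b-j) \<noteq> 0"
      "phi l a b \<le> \<alpha> + \<beta>" for i j a b
  proof -
    have s: "phi l a b = phi l i j + phi l (a-i) (b-j)" using phi_split that(1,2) by blast
    from A that(3) have "(i = a1 \<and> j = b1) \<or> \<alpha> < phi l i j" unfolding ulb_def by blast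
    moreover from B that(4) have "(a-i = a2 \<and> b-j = b2) \<or> \<beta> < phi l (a-i) (b-j)" unfolding ulb_def by blast
    ultimately show ?thesis using A B s that(5) unfolding ulb_def by force
  qed
  have p: "phi l (a1+a2) (b1+b2) = \<alpha>+\<beta>" using A B unfolding ulb_def by (simp add: phi_add)
  have c: "bmul A B (a1+a2) (b1+b2) = A a1 b1 * B a2 b2"
  proof -
    have "bmul A B (a1+a2) (b1+b2) = (\<Sum>i\<le>a1+a2. \<Sum>j\<le>b1+b2. if i = a1 \<and> j = b1 then A a1 b1 * B a2 b2 else 0)"
      unfolding bmul_def
    proof (intro sum.cong refl)
      fix i j assume i: "i \<in> {..a1+a2}" and j: "j \<in> {..b1+b2}"
      show "A i j * B (a1 + a2 - i) (b1 + b2 - j) = (if i = a1 \<and> j = b1 then A a1 b1 * B a2 b2 else 0)"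
        using key[of i "a1+a2" j "b1+b2"] i j p by auto
    qed
    also have "\<dots> = A a1 b1 * B a2 b2" by (rule sum2_delta) auto
    finally show ?thesis .
  qed
  have u: "ulb l (bmul A B) (\<alpha>+\<beta>) (a1+a2) (b1+b2)"
    unfolding ulb_def
  proof (intro conjI p allI impI)
    fix a b assume "bmul A B a b \<noteq> 0"
    then obtain i j where ij: "i \<le> a" "j \<le> b" "A i j \<noteq> 0" "B (a-i) (b-j) \<noteq> 0" using bmul_nz by blast
    have lbm: "\<alpha>+\<beta> \<le> phi l a b" using lb_mul[OF ulb_lb[OF A] ulb_lb[OF B]] \<open>bmul A B a b \<noteq> 0\<close>
      unfolding lb_def by blast
    show "a = a1 + a2 \<and> b = b1 + b2 \<or> \<alpha> + \<beta> < phi l a b"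
    proof (cases "phi l a b \<le> \<alpha>+\<beta>")
      case True
      with key ij have "i = a1 \<and> j = b1" by blast
      moreover have "(a-i = a2 \<and> b-j = b2) \<or> \<beta> < phi l (a-i) (b-j)" using B ij unfolding ulb_def by blast
      moreover have "phi l a b = phi l i j + phi l (a-i) (b-j)" using phi_split ij by blast
      ultimately show ?thesis using A True ij(1,2) unfolding ulb_def by force
    qed simp
  qed
  show ?thesis using u c by blast
qed

lemma bpow0_nz: "bpow A 0 i j \<noteq> 0 \<longleftrightarrow> i = 0 \<and> j = 0" by simp

lemma lb_pow: "lb l A \<alpha> \<Longrightarrow> lb l (bpow A n) (real n * \<alpha>)"
proof (induction n)
  case 0 then show ?case by (simp add: lb_def phi_def)
next
  case (Suc n)
  then show ?case using lb_mul[OF Suc.prems Suc.IH] by (simp add: algebra_simps)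
qed

lemma ulb_pow: "ulb l A \<alpha> a b \<Longrightarrow> ulb l (bpow A n) (real n * \<alpha>) (n*a) (n*b) \<and> bpow A n (n*a) (n*b) = A a b ^ n"
proof (induction n)
  case 0 then show ?case by (simp add: ulb_def phi_def)
next
  case (Suc n)
  then show ?case using ulb_mul[OF Suc.prems conjunct1[OF Suc.IH]] by (simp add: algebra_simps)
qed

lemma bcomp_nz: "bcomp g P Q a b \<noteq> 0 \<Longrightarrow> \<exists>i j. g i j \<noteq> 0 \<and> bmul (bpow P i) (bpow Q j) a b \<noteq> 0"
  unfolding bcomp_def by (fastforce dest!: sum_nz)

lemma bcomp_lb:
  assumes "lb l P \<alpha>" "lb l Q \<beta>" "\<forall>i j. g i j \<noteq> 0 \<longrightarrow> \<theta> \<le> real i * \<alpha> + real j * \<beta>"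
  shows "lb l (bcomp g P Q) \<theta>"
  unfolding lb_def
proof (intro allI impI)
  fix a b assume "bcomp g P Q a b \<noteq> 0"
  then obtain i j where "g i j \<noteq> 0" "bmul (bpow P i) (bpow Q j) a b \<noteq> 0" using bcomp_nz by blast
  moreover have "lb l (bmul (bpow P i) (bpow Q j)) (real i * \<alpha> + real j * \<beta>)"
    using lb_mul[OF lb_pow[OF assms(1)] lb_pow[OF assms(2)], of i j] .
  ultimately have "real i * \<alpha> + real j * \<beta> \<le> phi l a b" unfolding lb_def by blast
  moreover have "\<theta> \<le> real i * \<alpha> + real j * \<beta>" using assms(3) \<open>g i j \<noteq> 0\<close> by blast
  ultimately show "\<theta> \<le> phi l a b" by linarith
qed

lemma bcomp_lead:
  assumes P: "ulb l P \<alpha> a1 b1" and Q: "ulb l Q \<beta> a2 b2" and "1 \<le> a1+b1" "1 \<le> a2+b2"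
    and g: "\<forall>i j. g i j \<noteq> 0 \<longrightarrow> (i = i0 \<and> j = j0) \<or> real i0 * \<alpha> + real j0 * \<beta> < real i * \<alpha> + real j * \<beta>"
  shows "bcomp g P Q (i0*a1+j0*a2) (i0*b1+j0*b2) = g i0 j0 * P a1 b1 ^ i0 * Q a2 b2 ^ j0"
proof -
  define A where "A = i0*a1+j0*a2"
  define B where "B = i0*b1+j0*b2"
  have "phi l A B = real i0 * phi l a1 b1 + real j0 * phi l a2 b2"
    unfolding A_def B_def phi_def by (simp add: algebra_simps)
  then have pAB: "phi l A B = real i0 * \<alpha> + real j0 * \<beta>"
    using P Q unfolding ulb_def by simp
  have lead: "bmul (bpow P i0) (bpow Q j0) A B = P a1 b1 ^ i0 * Q a2 b2 ^ j0"
    using ulb_mul[OF conjunct1[OF ulb_pow[OF P, of i0]] conjunct1[OF ulb_pow[OF Q, of j0]]]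
      ulb_pow[OF P, of i0] ulb_pow[OF Q, of j0] unfolding A_def B_def by simp
  have "i0 + j0 \<le> A + B"
  proof -
    have "i0 \<le> i0 * (a1+b1)" by (metis assms(3) mult_le_mono2 mult_1_right)
    moreover have "j0 \<le> j0 * (a2+b2)" by (metis assms(4) mult_le_mono2 mult_1_right)
    ultimately have "i0 + j0 \<le> i0 * (a1+b1) + j0 * (a2+b2)" by (rule add_le_mono)
    then show ?thesis by (simp add: A_def B_def algebra_simps)
  qed
  then have r: "i0 \<le> A+B" "j0 \<le> A+B" by auto
  have "bcomp g P Q A B = (\<Sum>i\<le>A+B. \<Sum>j\<le>A+B. if i = i0 \<and> j = j0 then g i0 j0 * (P a1 b1 ^ i0 * Q a2 b2 ^ j0) else 0)"
    unfolding bcomp_def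
  proof (intro sum.cong refl)
    fix i j
    show "g i j * bmul (bpow P i) (bpow Q j) A B =
         (if i = i0 \<and> j = j0 then g i0 j0 * (P a1 b1 ^ i0 * Q a2 b2 ^ j0) else 0)"
    proof (cases "i = i0 \<and> j = j0")
      case True then show ?thesis using lead by simp
    next
      case False
      show ?thesis
      proof (cases "g i j = 0")
        case False
        with g \<open>\<not>(i = i0 \<and> j = j0)\<close> have lt: "real i0 * \<alpha> + real j0 * \<beta> < real i * \<alpha> + real j * \<beta>" by blast
        have "bmul (bpow P i) (bpow Q j) A B = 0"
        proof (rule ccontr)
          assume "bmul (bpow P i) (bpow Q j) A B \<noteq> 0"
          with lb_mul[OF lb_pow[OF ulb_lb[OF P]] lb_pow[OF ulb_lb[OF Q]], of i j]
          have "real i * \<alpha> + real j * \<beta> \<le> phi l A B" unfolding lb_def by blast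
          with lt pAB show False by simp
        qed
        then show ?thesis using \<open>\<not>(i = i0 \<and> j = j0)\<close> by (simp only: if_False mult_zero_right)
      qed (use \<open>\<not>(i = i0 \<and> j = j0)\<close> in \<open>simp only: if_False mult_zero_left\<close>)
    qed
  qed
  also have "\<dots> = g i0 j0 * P a1 b1 ^ i0 * Q a2 b2 ^ j0"
    using r by (subst sum2_delta) (auto simp: mult.assoc)
  finally show ?thesis unfolding A_def B_def .
qed

definition qu :: "bps \<Rightarrow> (real \<times> real) set" where
  "qu g = (\<Union>{ {(x, y). real i \<le> x \<and> real j \<le> y} | i j. g i j \<noteq> 0 })"

lemma np_def2: "newton_polygon g = convex hull (qu g)"
  unfolding newton_polygon_def qu_def by simp

lemma qu_iff: "v \<in> qu g \<longleftrightarrow> (\<exists>i j. g i j \<noteq> 0 \<and> real i \<le> fst v \<and> real j \<le> snd v)"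
  unfolding qu_def by (cases v) auto

lemma qu_sub_np: "qu g \<subseteq> newton_polygon g"
  unfolding np_def2 by (rule hull_subset)

lemma np_convex: "convex (newton_polygon g)"
  unfolding np_def2 by simp

lemma np_up:
  assumes "v \<in> newton_polygon g" "0 \<le> t"
  shows "(0,t) + v \<in> newton_polygon g"
proof -
  have sub: "(\<lambda>x. (0,t) + x) ` qu g \<subseteq> qu g"
    using assms(2) by (auto simp: qu_iff) (meson add_increasing order_trans)+
  have "(0,t) + v \<in> (\<lambda>x. (0,t) + x) ` (convex hull qu g)" using assms(1) unfolding np_def2 by blast
  also have "\<dots> = convex hull ((\<lambda>x. (0,t) + x) ` qu g)" by (rule convex_hull_translation[symmetric])
  also have "\<dots> \<subseteq> convex hull qu g" using sub by (rule hull_mono)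
  finally show ?thesis unfolding np_def2 .
qed

lemma np_halfspace:
  assumes "\<forall>i j. g i j \<noteq> 0 \<longrightarrow> c \<le> real i + l * real j" "0 \<le> l" "v \<in> newton_polygon g"
  shows "c \<le> fst v + l * snd v"
proof -
  let ?H = "{v::real\<times>real. c \<le> fst v + l * snd v}"
  have H: "?H = {v. inner (1,l) v \<ge> c}" by (auto simp: inner_prod_def)
  have "convex ?H" unfolding H by (rule convex_halfspace_ge)
  moreover have "qu g \<subseteq> ?H"
  proof
    fix w assume "w \<in> qu g"
    then obtain i j where ij: "g i j \<noteq> 0" "real i \<le> fst w" "real j \<le> snd w" by (auto simp: qu_iff)
    have "l * real j \<le> l * snd w" using ij(3) assms(2) by (rule mult_left_mono)
    then show "w \<in> ?H" using assms(1) ij by force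
  qed
  ultimately have "newton_polygon g \<subseteq> ?H" unfolding np_def2 by (rule hull_minimal[rotated])
  then show ?thesis using assms(3) by blast
qed

lemma extreme_support:
  assumes "v extreme_point_of newton_polygon g"
  shows "\<exists>i j. v = (real i, real j) \<and> g i j \<noteq> 0"
proof -
  have "v \<in> qu g" using assms unfolding np_def2 by (rule extreme_point_of_convex_hull)
  then obtain i j where ij: "g i j \<noteq> 0" "real i \<le> fst v" "real j \<le> snd v" by (auto simp: qu_iff)
  show ?thesis
  proof (cases "v = (real i, real j)")
    case True then show ?thesis using ij by blast
  next
    case False
    define a where "a = (real i, real j)"
    define b where "b = (2 * fst v - real i, 2 * snd v - real j)"
    have a: "a \<in> newton_polygon g" using qu_sub_np ij unfolding a_def by (force simp: qu_iff)
    have b: "b \<in> newton_polygon g" using qu_sub_np ij unfolding b_def by (force simp: qu_iff)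
    have "v \<in> open_segment a b" unfolding in_segment
    proof (intro conjI exI[of _ "1/2"])
      show "a \<noteq> b" using False unfolding a_def b_def by (cases v) auto
      show "v = (1 - 1/2) *\<^sub>R a + (1/2) *\<^sub>R b" unfolding a_def b_def by (cases v) (auto simp: field_simps)
    qed auto
    then show ?thesis using assms a b unfolding extreme_point_of_def by blast
  qed
qed

lemma point_extreme:
  assumes nz: "g a b \<noteq> 0" and l: "0 \<le> l1" "l1 < l2"
    and h1: "\<forall>i j. g i j \<noteq> 0 \<longrightarrow> real a + l1 * real b \<le> real i + l1 * real j"
    and h2: "\<forall>i j. g i j \<noteq> 0 \<longrightarrow> real a + l2 * real b \<le> real i + l2 * real j"
  shows "(real a, real b) extreme_point_of newton_polygon g"
  unfolding extreme_point_of_def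
proof (intro conjI ballI)
  show "(real a, real b) \<in> newton_polygon g" using qu_sub_np nz by (force simp: qu_iff)
  fix u w assume u: "u \<in> newton_polygon g" and w: "w \<in> newton_polygon g"
  show "(real a, real b) \<notin> open_segment u w"
  proof
    assume "(real a, real b) \<in> open_segment u w"
    then obtain t where t: "u \<noteq> w" "0 < t" "t < 1" "(real a, real b) = (1 - t) *\<^sub>R u + t *\<^sub>R w"
      unfolding in_segment by blast
    obtain u1 u2 where uu: "u = (u1,u2)" by (cases u)
    obtain w1 w2 where ww: "w = (w1,w2)" by (cases w)
    have e1: "real a = (1-t)*u1 + t*w1" and e2: "real b = (1-t)*u2 + t*w2" using t(4) uu ww by auto
    have U1: "real a + l1 * real b \<le> u1 + l1 * u2" using np_halfspace[OF h1 l(1) u] uu by simp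
    have W1: "real a + l1 * real b \<le> w1 + l1 * w2" using np_halfspace[OF h1 l(1) w] ww by simp
    have U2: "real a + l2 * real b \<le> u1 + l2 * u2" using np_halfspace[OF h2 _ u] l uu by simp
    have W2: "real a + l2 * real b \<le> w1 + l2 * w2" using np_halfspace[OF h2 _ w] l ww by simp
    have c1: "(1-t) * ((u1 + l1*u2) - (real a + l1 * real b)) + t * ((w1 + l1*w2) - (real a + l1 * real b)) = 0"
      unfolding e1 e2 by (simp add: algebra_simps)
    have c2: "(1-t) * ((u1 + l2*u2) - (real a + l2 * real b)) + t * ((w1 + l2*w2) - (real a + l2 * real b)) = 0"
      unfolding e1 e2 by (simp add: algebra_simps)
    have z: "x = 0" "y = 0" if "0 \<le> x" "0 \<le> y" "(1-t)*x + t*y = 0" for x y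
    proof -
      have "0 \<le> (1-t)*x" "0 \<le> t*y" using that t by simp_all
      then have "(1-t)*x = 0" "t*y = 0" using that(3) by linarith+
      then show "x = 0" "y = 0" using t by simp_all
    qed
    have "u1 + l1*u2 = real a + l1 * real b" "w1 + l1*w2 = real a + l1 * real b"
      using z[OF _ _ c1] U1 W1 by simp_all
    moreover have "u1 + l2*u2 = real a + l2 * real b" "w1 + l2*w2 = real a + l2 * real b"
      using z[OF _ _ c2] U2 W2 by simp_all
    ultimately have "(l2 - l1) * u2 = (l2 - l1) * real b" "(l2 - l1) * w2 = (l2 - l1) * real b"
      by (simp_all add: algebra_simps)
    then have "u2 = real b" "w2 = real b" using l by simp_all
    then have "u = w" using \<open>u1 + l1*u2 = _\<close> \<open>w1 + l1*w2 = _\<close> uu ww by simp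
    then show False using t(1) by blast
  qed
qed

lemma not_extreme3:
  fixes L M R :: "real \<times> real"
  assumes N: "L \<in> newton_polygon g" "M \<in> newton_polygon g" "R \<in> newton_polygon g"
    and x: "fst L < fst M" "fst M < fst R" and l: "0 < l"
    and pL: "fst L + l * snd L \<le> fst M + l * snd M" and pR: "fst R + l * snd R \<le> fst M + l * snd M"
  shows "\<not> M extreme_point_of newton_polygon g"
proof
  assume ext: "M extreme_point_of newton_polygon g"
  define \<tau> where "\<tau> = (fst M - fst L) / (fst R - fst L)"
  have \<tau>: "0 < \<tau>" "\<tau> < 1" using x unfolding \<tau>_def by (auto simp: field_simps)
  define p where "p = (1 - \<tau>) *\<^sub>R L + \<tau> *\<^sub>R R"
  have pN: "p \<in> newton_polygon g" unfolding p_def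
    using np_convex[of g] N(1,3) \<tau> unfolding convex_def by simp
  have "fst p = fst L + \<tau> * (fst R - fst L)" unfolding p_def by (simp add: algebra_simps)
  moreover have "\<tau> * (fst R - fst L) = fst M - fst L" unfolding \<tau>_def using x by simp
  ultimately have fp: "fst p = fst M" by simp
  have "fst p + l * snd p = (1-\<tau>) * (fst L + l * snd L) + \<tau> * (fst R + l * snd R)"
    unfolding p_def by (simp add: algebra_simps)
  also have "\<dots> \<le> (1-\<tau>) * (fst M + l * snd M) + \<tau> * (fst M + l * snd M)"
    using \<tau> mult_left_mono[OF pL, of "1-\<tau>"] mult_left_mono[OF pR, of "\<tau>"] by linarith
  also have "\<dots> = fst M + l * snd M" by (simp add: algebra_simps)
  finally have "l * snd p \<le> l * snd M" using fp by simp
  then have sp: "snd p \<le> snd M" using l by simp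
  define t where "t = snd M - snd p"
  have t0: "0 \<le> t" using sp unfolding t_def by simp
  show False
  proof (cases "t = 0")
    case True
    then have "M = p" using fp unfolding t_def by (simp add: prod_eq_iff)
    moreover have "L \<noteq> R" using x by auto
    ultimately have "M \<in> open_segment L R" unfolding in_segment p_def using \<tau> by blast
    then show False using ext N unfolding extreme_point_of_def by blast
  next
    case False
    then have tp: "0 < t" using t0 by simp
    define b where "b = (0, 2*t) + p"
    have bN: "b \<in> newton_polygon g" unfolding b_def using np_up[OF pN] tp by simp
    have "M \<in> open_segment p b" unfolding in_segment
    proof (intro conjI exI[of _ "1/2"])
      show "p \<noteq> b" using tp unfolding b_def by (simp add: prod_eq_iff)
      show "M = (1 - 1/2) *\<^sub>R p + (1/2) *\<^sub>R b" using fp unfolding b_def t_def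
        by (simp add: prod_eq_iff algebra_simps)
    qed auto
    then show False using ext pN bN unfolding extreme_point_of_def by blast
  qed
qed

lemma fin_real_le: "finite {i::nat. real i \<le> X}"
proof (rule finite_subset[of _ "{..nat \<lceil>X\<rceil>}"])
  show "{i::nat. real i \<le> X} \<subseteq> {..nat \<lceil>X\<rceil>}"
  proof
    fix i assume "i \<in> {i::nat. real i \<le> X}"
    then have "real i \<le> X" by simp
    then have "real i \<le> real_of_int \<lceil>X\<rceil>" using le_of_int_ceiling by (rule order_trans)
    then have "int i \<le> \<lceil>X\<rceil>" by (metis of_int_le_iff of_int_of_nat_eq)
    then show "i \<in> {..nat \<lceil>X\<rceil>}" by (simp add: le_nat_iff)
  qed
qed simp

lemma comb_zero:
  fixes t x y :: real
  assumes "0 < t" "t < 1" "0 \<le> x" "0 \<le> y" "(1-t)*x + t*y = 0"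
  shows "x = 0 \<and> y = 0"
proof -
  have "0 \<le> (1-t)*x" "0 \<le> t*y" using assms by simp_all
  then have "(1-t)*x = 0" "t*y = 0" using assms(5) by linarith+
  then show ?thesis using assms(1,2) by simp
qed

lemma exists_extreme_below:
  assumes nz: "g i0 j0 \<noteq> 0" and l: "0 < l"
  shows "\<exists>v. v extreme_point_of newton_polygon g \<and> fst v + l * snd v \<le> real i0 + l * real j0"
proof -
  define \<phi>0 where "\<phi>0 = real i0 + l * real j0"
  define pf where "pf = (\<lambda>p::nat\<times>nat. phi l (fst p) (snd p))"
  define F where "F = {p. g (fst p) (snd p) \<noteq> 0 \<and> pf p \<le> \<phi>0}"
  have "F \<subseteq> {i::nat. real i \<le> \<phi>0} \<times> {j::nat. real j \<le> \<phi>0 / l}"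
  proof
    fix p assume "p \<in> F"
    then have h: "real (fst p) + l * real (snd p) \<le> \<phi>0" unfolding F_def pf_def phi_def by simp
    have "0 \<le> l * real (snd p)" using l by simp
    then have "real (fst p) \<le> \<phi>0" using h by linarith
    moreover have "l * real (snd p) \<le> \<phi>0" using h by simp
    then have "real (snd p) \<le> \<phi>0 / l" using l by (simp add: field_simps)
    ultimately show "p \<in> {i::nat. real i \<le> \<phi>0} \<times> {j::nat. real j \<le> \<phi>0 / l}" by (cases p) auto
  qed
  then have finF: "finite F" using fin_real_le by (meson finite_SigmaI finite_subset)
  have p0F: "(i0,j0) \<in> F" using nz unfolding F_def pf_def phi_def \<phi>0_def by simp
  define m where "m = Min (pf ` F)"
  have m_le: "m \<le> pf p" if "p \<in> F" for p using finF that unfolding m_def by simp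
  have m_in: "m \<in> pf ` F" using finF p0F unfolding m_def by (intro Min_in) auto
  define G where "G = {p\<in>F. pf p = m}"
  have finG: "finite G" using finF unfolding G_def by simp
  have Gne: "G \<noteq> {}" using m_in unfolding G_def by auto
  define as where "as = Min (fst ` G)"
  have "as \<in> fst ` G" using finG Gne unfolding as_def by (intro Min_in) auto
  then obtain bs where pzG: "(as,bs) \<in> G" by force
  have as_le: "as \<le> fst p" if "p \<in> G" for p using finG that unfolding as_def by simp
  have mall: "m \<le> phi l i j" if "g i j \<noteq> 0" for i j
  proof (cases "phi l i j \<le> \<phi>0")
    case True then have "(i,j) \<in> F" using that unfolding F_def pf_def by simp
    then show ?thesis using m_le unfolding pf_def by force
  next
    case False
    have "m \<le> \<phi>0" using m_le[OF p0F] unfolding pf_def phi_def \<phi>0_def by simp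
    then show ?thesis using False by simp
  qed
  have aall: "real as \<le> real i" if "g i j \<noteq> 0" "phi l i j = m" for i j
  proof -
    have "(i,j) \<in> F" using that mall m_le[OF p0F] unfolding F_def pf_def \<phi>0_def phi_def by simp
    then have "(i,j) \<in> G" using that unfolding G_def pf_def by simp
    then show ?thesis using as_le by force
  qed
  define \<phi> where "\<phi> = (\<lambda>v::real\<times>real. fst v + l * snd v)"
  define H where "H = {v. m < \<phi> v \<or> (\<phi> v = m \<and> real as \<le> fst v)}"
  have cH: "convex H"
  proof (rule convexI)
    fix u w :: "real\<times>real" and a b :: real
    assume u: "u \<in> H" and w: "w \<in> H" and ab1: "0 \<le> a" "0 \<le> b" "a + b = 1"
    then have ab: "0 \<le> a \<and> 0 \<le> b \<and> a + b = 1" by simp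
    have pc: "\<phi> (a *\<^sub>R u + b *\<^sub>R w) = a * \<phi> u + b * \<phi> w" unfolding \<phi>_def by (simp add: algebra_simps)
    have fc: "fst (a *\<^sub>R u + b *\<^sub>R w) = a * fst u + b * fst w" by simp
    show "a *\<^sub>R u + b *\<^sub>R w \<in> H"
    proof (cases "a = 0")
      case True then show ?thesis using ab w by simp
    next
      case a0: False
      show ?thesis
      proof (cases "b = 0")
        case True then show ?thesis using ab u by simp
      next
        case b0: False
        have ap: "0 < a" "0 < b" using ab a0 b0 by auto
        have mu: "m \<le> \<phi> u" "m \<le> \<phi> w" using u w unfolding H_def by auto
        show ?thesis
        proof (cases "m < \<phi> u \<or> m < \<phi> w")
          case True
          have "a * m < a * \<phi> u \<or> b * m < b * \<phi> w" using True ap by auto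
          moreover have "a * m \<le> a * \<phi> u" "b * m \<le> b * \<phi> w" using mu ap by simp_all
          ultimately have "a * m + b * m < a * \<phi> u + b * \<phi> w" by linarith
          moreover have "a * m + b * m = m" using ab by (simp add: algebra_simps flip: distrib_right)
          ultimately show ?thesis unfolding H_def using pc by simp
        next
          case False
          then have e: "\<phi> u = m" "\<phi> w = m" using mu by auto
          then have "real as \<le> fst u" "real as \<le> fst w" using u w unfolding H_def by auto
          then have "a * real as + b * real as \<le> a * fst u + b * fst w"
            using ap by (intro add_mono mult_left_mono) auto
          moreover have "a * real as + b * real as = real as" "a * m + b * m = m" using ab
            by (simp_all add: algebra_simps flip: distrib_right)
          ultimately show ?thesis unfolding H_def using pc fc e by simp
        qed
      qed
    qed
  qed
  have quH: "qu g \<subseteq> H"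
  proof
    fix w assume "w \<in> qu g"
    then obtain i j where ij: "g i j \<noteq> 0" "real i \<le> fst w" "real j \<le> snd w" by (auto simp: qu_iff)
    have lj: "l * real j \<le> l * snd w" using ij(3) l by simp
    have mi: "m \<le> phi l i j" using mall ij(1) .
    show "w \<in> H"
    proof (cases "\<phi> w = m")
      case True
      then have "phi l i j = m" "fst w = real i" using mi ij lj unfolding \<phi>_def phi_def by linarith+
      then show ?thesis using aall[OF ij(1)] True unfolding H_def by simp
    next
      case False
      then show ?thesis using mi ij lj unfolding H_def \<phi>_def phi_def by auto
    qed
  qed
  have NH: "newton_polygon g \<subseteq> H" unfolding np_def2 using quH cH by (rule hull_minimal)
  define z where "z = (real as, real bs)"
  have gz: "g as bs \<noteq> 0" and pz: "\<phi> z = m"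
    using pzG unfolding G_def F_def pf_def z_def \<phi>_def phi_def by auto
  have zN: "z \<in> newton_polygon g" using qu_sub_np gz unfolding z_def by (force simp: qu_iff)
  have ext: "z extreme_point_of newton_polygon g"
    unfolding extreme_point_of_def
  proof (intro conjI zN ballI)
    fix u w assume uN: "u \<in> newton_polygon g" and wN: "w \<in> newton_polygon g"
    show "z \<notin> open_segment u w"
    proof
      assume "z \<in> open_segment u w"
      then obtain t where t: "u \<noteq> w" "0 < t" "t < 1" "z = (1 - t) *\<^sub>R u + t *\<^sub>R w"
        unfolding in_segment by blast
      have uH: "u \<in> H" and wH: "w \<in> H" using uN wN NH by auto
      have mu: "m \<le> \<phi> u" "m \<le> \<phi> w" using uH wH unfolding H_def by auto
      have "(1-t) * (\<phi> u - m) + t * (\<phi> w - m) = 0"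
        using pz unfolding t(4) \<phi>_def by (simp add: algebra_simps)
      then have "\<phi> u - m = 0 \<and> \<phi> w - m = 0" using mu by (intro comb_zero[OF t(2,3)]) auto
      then have e: "\<phi> u = m" "\<phi> w = m" by auto
      then have ge: "real as \<le> fst u" "real as \<le> fst w" using uH wH unfolding H_def by auto
      have "(1-t) * (fst u - real as) + t * (fst w - real as) = 0"
        using arg_cong[OF t(4), of fst] unfolding z_def by (simp add: algebra_simps)
      then have "fst u - real as = 0 \<and> fst w - real as = 0" using ge by (intro comb_zero[OF t(2,3)]) auto
      then have f: "fst u = real as" "fst w = real as" by auto
      then have "l * snd u = l * snd w" using e unfolding \<phi>_def by linarith
      then have "snd u = snd w" using l by simp
      then show False using f t(1) by (simp add: prod_eq_iff)
    qed
  qed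
  have "m \<le> \<phi>0" using m_le[OF p0F] unfolding pf_def phi_def \<phi>0_def by simp
  then show ?thesis using ext pz unfolding \<phi>_def \<phi>0_def by blast
qed

lemma edge_support:
  fixes q :: bps and nv mv :: "nat \<Rightarrow> nat" and s a :: nat
  assumes hvert: "{v. v extreme_point_of newton_polygon q} = (\<lambda>i. (real (nv i), real (mv i))) ` {1..s}"
    and hnv: "\<forall>i\<in>{1..s}. \<forall>j\<in>{1..s}. i < j \<longrightarrow> nv i < nv j"
    and hmv: "\<forall>i\<in>{1..s}. \<forall>j\<in>{1..s}. i < j \<longrightarrow> mv j < mv i"
    and a: "1 \<le> a" "a + 1 \<le> s"
  defines "lam \<equiv> (real (nv (a+1)) - real (nv a)) / (real (mv a) - real (mv (a+1)))"
  shows "0 < lam" "real (nv (a+1)) + lam * real (mv (a+1)) = real (nv a) + lam * real (mv a)"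
    "\<forall>i j. q i j \<noteq> 0 \<longrightarrow> real (nv a) + lam * real (mv a) \<le> real i + lam * real j"
proof -
  define vt where "vt = (\<lambda>i. (real (nv i), real (mv i)))"
  have ext: "vt i extreme_point_of newton_polygon q" if "i \<in> {1..s}" for i
    using hvert that unfolding vt_def by blast
  have inN: "vt i \<in> newton_polygon q" if "i \<in> {1..s}" for i
    using ext[OF that] unfolding extreme_point_of_def by blast
  have n1: "nv a < nv (a+1)" and m1: "mv (a+1) < mv a" using hnv hmv a by auto
  show lp: "0 < lam" unfolding lam_def using n1 m1 by (simp add: divide_pos_pos)
  have dm: "real (mv a) - real (mv (a+1)) > 0" using m1 by simp
  show eq: "real (nv (a+1)) + lam * real (mv (a+1)) = real (nv a) + lam * real (mv a)"
    unfolding lam_def using dm by (simp add: field_simps)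
  define c where "c = real (nv a) + lam * real (mv a)"
  show "\<forall>i j. q i j \<noteq> 0 \<longrightarrow> real (nv a) + lam * real (mv a) \<le> real i + lam * real j"
  proof (rule ccontr)
    assume "\<not> ?thesis"
    then obtain i0 j0 where q0: "q i0 j0 \<noteq> 0" and lt: "real i0 + lam * real j0 < c" unfolding c_def by force
    obtain v where v: "v extreme_point_of newton_polygon q" "fst v + lam * snd v \<le> real i0 + lam * real j0"
      using exists_extreme_below[of q i0 j0, OF q0 lp] by blast
    then obtain i where i: "i \<in> {1..s}" "v = vt i" using hvert unfolding vt_def by blast
    have pv: "real (nv i) + lam * real (mv i) < c" using v(2) lt i(2) unfolding vt_def by simp
    have a1: "a \<in> {1..s}" "a+1 \<in> {1..s}" using a by auto
    consider "i < a" | "i = a" | "i = a+1" | "a + 1 < i" by linarith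
    then show False
    proof cases
      case 1
      have "\<not> vt a extreme_point_of newton_polygon q"
      proof (rule not_extreme3[OF inN[OF i(1)] inN[OF a1(1)] inN[OF a1(2)]])
        show "fst (vt i) < fst (vt a)" "fst (vt a) < fst (vt (a+1))"
          using hnv i(1) a1 1 n1 unfolding vt_def by auto
        show "fst (vt i) + lam * snd (vt i) \<le> fst (vt a) + lam * snd (vt a)"
          using pv unfolding vt_def c_def by simp
        show "fst (vt (a+1)) + lam * snd (vt (a+1)) \<le> fst (vt a) + lam * snd (vt a)"
          using eq unfolding vt_def by simp
      qed (rule lp)
      then show False using ext[OF a1(1)] by blast
    next
      case 2 then show False using pv unfolding c_def by simp
    next
      case 3 then show False using pv eq unfolding c_def by simp
    next
      case 4
      have "\<not> vt (a+1) extreme_point_of newton_polygon q"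
      proof (rule not_extreme3[OF inN[OF a1(1)] inN[OF a1(2)] inN[OF i(1)]])
        show "fst (vt a) < fst (vt (a+1))" "fst (vt (a+1)) < fst (vt i)"
          using hnv i(1) a1 4 n1 unfolding vt_def by auto
        show "fst (vt a) + lam * snd (vt a) \<le> fst (vt (a+1)) + lam * snd (vt (a+1))"
          using eq unfolding vt_def by simp
        show "fst (vt i) + lam * snd (vt i) \<le> fst (vt (a+1)) + lam * snd (vt (a+1))"
          using pv eq unfolding vt_def c_def by simp
      qed (rule lp)
      then show False using ext[OF a1(2)] by blast
    qed
  qed
qed

lemma bmul_one: "bmul A (bpow B 0) = A"
proof (intro ext)
  fix a b
  have "bmul A (bpow B 0) a b = (\<Sum>i\<le>a. \<Sum>j\<le>b. if i = a \<and> j = b then A a b else 0)"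
    unfolding bmul_def by (intro sum.cong refl) auto
  also have "\<dots> = A a b" by (rule sum2_delta) auto
  finally show "bmul A (bpow B 0) a b = A a b" .
qed

lemma bmul_one': "bmul A (\<lambda>a b. if a = 0 \<and> b = 0 then 1 else 0) = A"
  using bmul_one[of A A] by simp

definition zonly :: "bps \<Rightarrow> bool" where "zonly A \<longleftrightarrow> (\<forall>i j. A i j \<noteq> 0 \<longrightarrow> j = 0)"

lemma zonly_mul: "zonly A \<Longrightarrow> zonly B \<Longrightarrow> zonly (bmul A B)"
  unfolding zonly_def by (metis bmul_nz diff_zero)

lemma zonly_pow: "zonly A \<Longrightarrow> zonly (bpow A n)"
proof (induction n)
  case 0 show ?case by (simp add: zonly_def)
next
  case (Suc n) then show ?case unfolding bpow.simps using zonly_mul by blast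
qed

lemma embed_comp: "bcomp (embed_z p) P Q a b = (\<Sum>i\<le>a+b. p i * bpow P i a b)"
  unfolding bcomp_def
proof (intro sum.cong refl)
  fix i
  have "(\<Sum>j\<le>a + b. embed_z p i j * bmul (bpow P i) (bpow Q j) a b)
      = (\<Sum>j\<le>a + b. if j = 0 then p i * bpow P i a b else 0)"
    by (intro sum.cong refl) (auto simp: embed_z_def bmul_one')
  also have "\<dots> = p i * bpow P i a b" by simp
  finally show "(\<Sum>j\<le>a + b. embed_z p i j * bmul (bpow P i) (bpow Q j) a b) = p i * bpow P i a b" .
qed

lemma zonly_embed_comp: "zonly P \<Longrightarrow> zonly (bcomp (embed_z p) P Q)"
  unfolding zonly_def
proof (intro allI impI)
  fix a b assume z: "\<forall>i j. P i j \<noteq> 0 \<longrightarrow> j = 0" and "bcomp (embed_z p) P Q a b \<noteq> 0"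
  then obtain i where "bpow P i a b \<noteq> 0" unfolding embed_comp by (fastforce dest!: sum_nz)
  moreover have "zonly (bpow P i)" using z zonly_pow unfolding zonly_def by blast
  ultimately show "b = 0" unfolding zonly_def by blast
qed

lemma skew_Suc: "skew_iter p q (Suc n) =
   (bcomp (embed_z p) (fst (skew_iter p q n)) (snd (skew_iter p q n)),
    bcomp q (fst (skew_iter p q n)) (snd (skew_iter p q n)))"
  by (simp add: Let_def split_def)

lemma hom_ineq:
  fixes A B D X l1 l2 :: real
  assumes "0 < D" "l1 * D \<le> X" "X \<le> l2 * D" "0 \<le> A + l1 * B" "0 \<le> A + l2 * B"
  shows "0 \<le> A * D + B * X"
proof (cases "0 \<le> B")
  case True
  have "B * (l1 * D) \<le> B * X" using assms(2) True by (rule mult_left_mono)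
  moreover have "0 \<le> D * (A + l1 * B)" using assms(1,4) by simp
  ultimately show ?thesis by (simp add: algebra_simps)
next
  case False
  have "B * (l2 * D) \<le> B * X" using assms(3) False by (simp add: mult_left_mono_neg)
  moreover have "0 \<le> D * (A + l2 * B)" using assms(1,5) by simp
  ultimately show ?thesis by (simp add: algebra_simps)
qed

lemma hom_strict:
  fixes A B D X l1 l2 :: real
  assumes "0 < D" "l1 * D < X" "X < l2 * D" "0 \<le> A + l1 * B" "0 \<le> A + l2 * B" "A \<noteq> 0 \<or> B \<noteq> 0"
  shows "0 < A * D + B * X"
proof -
  consider "0 < B" | "B < 0" | "B = 0" by linarith
  then show ?thesis
  proof cases
    case 1
    have "B * (l1 * D) < B * X" using assms(2) 1 by simp
    moreover have "0 \<le> D * (A + l1 * B)" using assms(1,4) by simp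
    ultimately show ?thesis by (simp add: algebra_simps)
  next
    case 2
    have "B * (l2 * D) < B * X" using assms(3) 2 by simp
    moreover have "0 \<le> D * (A + l2 * B)" using assms(1,5) by simp
    ultimately show ?thesis by (simp add: algebra_simps)
  next
    case 3 then show ?thesis using assms by simp
  qed
qed

theorem theorem6p1:
  fixes p :: "nat \<Rightarrow> complex" and q :: bps and \<delta> s k :: nat
    and nv mv :: "nat \<Rightarrow> nat"
  defines "T \<equiv> (\<lambda>j. yint (real (nv j)) (real (mv j)) (real (nv (j+1))) (real (mv (j+1))))"
    and "\<gamma> \<equiv> nv k" and "d \<equiv> mv k"
    and "l1 \<equiv> (real (nv k) - real (nv (k-1))) / (real (mv (k-1)) - real (mv k))"
    and "l2 \<equiv> (real (nv (k+1)) - real (nv k)) / (real (mv k) - real (mv (k+1)))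
              - (real (nv k) - real (nv (k-1))) / (real (mv (k-1)) - real (mv k))"
  assumes hp: "conv_germ1 p" and hq: "conv_germ2 q"
    and hdelta: "\<delta> \<ge> 1" and hpd: "p \<delta> \<noteq> 0" and hplow: "\<forall>i<\<delta>. p i = 0"
    and hq0: "q 0 0 = 0" and hqnz: "\<exists>i j. q i j \<noteq> 0"
    and hvert: "{v. v extreme_point_of newton_polygon q} = (\<lambda>i. (real (nv i), real (mv i))) ` {1..s}"
    and hnv: "\<forall>i\<in>{1..s}. \<forall>j\<in>{1..s}. i < j \<longrightarrow> nv i < nv j"
    and hmv: "\<forall>i\<in>{1..s}. \<forall>j\<in>{1..s}. i < j \<longrightarrow> mv j < mv i"
    and case4: "s > 2" "2 \<le> k" "k \<le> s - 1" "T k \<le> real \<delta>" "real \<delta> \<le> T (k - 1)"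
  shows "\<forall>n\<ge>1. let Qn = snd (skew_iter p q n);
                   gn = \<gamma> * (\<Sum>i<n. \<delta> ^ (n - 1 - i) * d ^ i)
               in Qn gn (d ^ n) \<noteq> 0
                  \<and> (real gn, real (d ^ n)) extreme_point_of newton_polygon Qn
                  \<and> (\<forall>l\<in>{l1..l1 + l2}. weight l Qn = weight l (monom gn (d ^ n))
                        \<and> weight l (monom gn (d ^ n)) = real gn + l * real (d ^ n))"
proof -
  define L2 where "L2 = l1 + l2"
  have km: "1 \<le> k-1" "k-1+1 = k" "(k-1)+1 \<le> s" "1 \<le> k" "k+1 \<le> s" "k \<in> {1..s}"
    "k-1 \<in> {1..s}" "k+1 \<in> {1..s}" using case4 by auto
  have E1: "0 < l1" "real (nv k) + l1 * real (mv k) = real (nv (k-1)) + l1 * real (mv (k-1))"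
    "\<forall>i j. q i j \<noteq> 0 \<longrightarrow> real (nv (k-1)) + l1 * real (mv (k-1)) \<le> real i + l1 * real j"
    using edge_support[OF hvert hnv hmv km(1) km(3)] km(2) unfolding l1_def by simp_all
  have L2e: "L2 = (real (nv (k+1)) - real (nv k)) / (real (mv k) - real (mv (k+1)))"
    unfolding L2_def l1_def l2_def by simp
  have E2: "0 < L2" "real (nv (k+1)) + L2 * real (mv (k+1)) = real (nv k) + L2 * real (mv k)"
    "\<forall>i j. q i j \<noteq> 0 \<longrightarrow> real (nv k) + L2 * real (mv k) \<le> real i + L2 * real j"
    using edge_support[OF hvert hnv hmv km(4) km(5)] unfolding L2e by simp_all
  have G1: "\<forall>i j. q i j \<noteq> 0 \<longrightarrow> real \<gamma> + l1 * real d \<le> real i + l1 * real j"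
    using E1 unfolding \<gamma>_def d_def by simp
  have G2: "\<forall>i j. q i j \<noteq> 0 \<longrightarrow> real \<gamma> + L2 * real d \<le> real i + L2 * real j"
    using E2 unfolding \<gamma>_def d_def by simp
  define vt where "vt = (\<lambda>i. (real (nv i), real (mv i)))"
  have ext: "vt i extreme_point_of newton_polygon q" if "i \<in> {1..s}" for i
    using hvert that unfolding vt_def by blast
  have inN: "vt i \<in> newton_polygon q" if "i \<in> {1..s}" for i
    using ext[OF that] unfolding extreme_point_of_def by blast
  have qgd: "q \<gamma> d \<noteq> 0"
  proof -
    obtain i j where "vt k = (real i, real j)" "q i j \<noteq> 0" using extreme_support[OF ext[OF km(6)]] by blast
    then show ?thesis unfolding vt_def \<gamma>_def d_def by simp
  qed
  have nk: "nv (k-1) < nv k" "nv k < nv (k+1)" and mk: "mv k < mv (k-1)" "mv (k+1) < mv k" "mv s < mv k"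
    using hnv hmv km case4 by auto
  have l12: "l1 < L2"
  proof (rule ccontr)
    assume "\<not> l1 < L2"
    then have le: "L2 \<le> l1" by simp
    have "real (nv (k+1)) - real (nv k) = L2 * (real (mv k) - real (mv (k+1)))"
      using E2(2) by (simp add: algebra_simps)
    moreover have "L2 * (real (mv k) - real (mv (k+1))) \<le> l1 * (real (mv k) - real (mv (k+1)))"
      using le mk by (intro mult_right_mono) auto
    ultimately have R: "fst (vt (k+1)) + l1 * snd (vt (k+1)) \<le> fst (vt k) + l1 * snd (vt k)"
      unfolding vt_def by (simp add: algebra_simps)
    have "\<not> vt k extreme_point_of newton_polygon q"
    proof (rule not_extreme3[OF inN[OF km(7)] inN[OF km(6)] inN[OF km(8)] _ _ E1(1) _ R])
      show "fst (vt (k-1)) < fst (vt k)" "fst (vt k) < fst (vt (k+1))" using nk unfolding vt_def by auto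
      show "fst (vt (k-1)) + l1 * snd (vt (k-1)) \<le> fst (vt k) + l1 * snd (vt k)"
        using E1(2) unfolding vt_def by simp
    qed
    then show False using ext[OF km(6)] by blast
  qed
  have d1: "1 \<le> d" using mk(3) unfolding d_def by simp
  have dpos: "0 < real d" using d1 by simp
  have A1: "l1 * (real \<delta> - real d) \<le> real \<gamma>"
  proof -
    have "real \<delta> \<le> T (k-1)" using case4 by simp
    also have "T (k-1) = real (mv (k-1)) + real (nv (k-1)) / l1"
      unfolding T_def yint_def l1_def using km(2) nk mk by (simp add: field_simps)
    finally have "l1 * real \<delta> \<le> l1 * real (mv (k-1)) + real (nv (k-1))"
      using E1(1) by (simp add: field_simps)
    then show ?thesis using E1(2) unfolding \<gamma>_def d_def by (simp add: algebra_simps)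
  qed
  have A2: "real \<gamma> \<le> L2 * (real \<delta> - real d)"
  proof -
    have "T k = real d + real \<gamma> / L2"
      unfolding T_def yint_def L2e \<gamma>_def d_def using nk mk by (simp add: field_simps)
    then have "real d + real \<gamma> / L2 \<le> real \<delta>" using case4 by simp
    then show ?thesis using E2(1) by (simp add: field_simps)
  qed
  define g where "g = (\<lambda>n. \<gamma> * (\<Sum>i<n. \<delta> ^ (n - 1 - i) * d ^ i))"
  have gsuc: "g (Suc n) = \<gamma> * \<delta> ^ n + d * g n" for n
  proof -
    have "(\<Sum>i<Suc n. \<delta> ^ (Suc n - 1 - i) * d ^ i) = \<delta> ^ n + (\<Sum>i<n. \<delta> ^ (n - Suc i) * d ^ Suc i)"
      by (subst sum.lessThan_Suc_shift) simp
    also have "(\<Sum>i<n. \<delta> ^ (n - Suc i) * d ^ Suc i) = d * (\<Sum>i<n. \<delta> ^ (n - 1 - i) * d ^ i)"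
      by (simp add: sum_distrib_left algebra_simps)
    finally show ?thesis unfolding g_def by (simp add: algebra_simps)
  qed
  have g0: "g 0 = 0" unfolding g_def by simp
  have gsucr: "real (g (Suc n)) + l * real (d ^ Suc n) = real \<gamma> * real \<delta> ^ n + real d * (real (g n) + l * real (d ^ n))" for n l
    unfolding gsuc by (simp add: algebra_simps)
  have intv: "l1 * real \<delta> ^ n \<le> real (g n) + l * real (d ^ n) \<and> real (g n) + l * real (d ^ n) \<le> L2 * real \<delta> ^ n"
    if "l1 \<le> l" "l \<le> L2" for l n
  proof (induction n)
    case 0 then show ?case using that by (simp add: g0)
  next
    case (Suc n)
    define X where "X = real (g n) + l * real (d ^ n)"
    have dX1: "real d * (l1 * real \<delta> ^ n) \<le> real d * X" using Suc dpos unfolding X_def by (intro mult_left_mono) auto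
    have dX2: "real d * X \<le> real d * (L2 * real \<delta> ^ n)" using Suc dpos unfolding X_def by (intro mult_left_mono) auto
    have a1: "l1 * real \<delta> * real \<delta> ^ n \<le> (real \<gamma> + real d * l1) * real \<delta> ^ n"
      using A1 by (intro mult_right_mono) (auto simp: algebra_simps)
    have a2: "(real \<gamma> + real d * L2) * real \<delta> ^ n \<le> L2 * real \<delta> * real \<delta> ^ n"
      using A2 by (intro mult_right_mono) (auto simp: algebra_simps)
    show ?case unfolding gsucr X_def[symmetric] using dX1 dX2 a1 a2 by (simp add: algebra_simps)
  qed
  have intvs: "l1 * real \<delta> ^ n < real (g n) + l * real (d ^ n) \<and> real (g n) + l * real (d ^ n) < L2 * real \<delta> ^ n"
    if "l1 < l" "l < L2" for l n
  proof (induction n)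
    case 0 then show ?case using that by (simp add: g0)
  next
    case (Suc n)
    define X where "X = real (g n) + l * real (d ^ n)"
    have dX1: "real d * (l1 * real \<delta> ^ n) < real d * X" using Suc dpos unfolding X_def by simp
    have dX2: "real d * X < real d * (L2 * real \<delta> ^ n)" using Suc dpos unfolding X_def by simp
    have a1: "l1 * real \<delta> * real \<delta> ^ n \<le> (real \<gamma> + real d * l1) * real \<delta> ^ n"
      using A1 by (intro mult_right_mono) (auto simp: algebra_simps)
    have a2: "(real \<gamma> + real d * L2) * real \<delta> ^ n \<le> L2 * real \<delta> * real \<delta> ^ n"
      using A2 by (intro mult_right_mono) (auto simp: algebra_simps)
    show ?case unfolding gsucr X_def[symmetric] using dX1 dX2 a1 a2 by (simp add: algebra_simps)
  qed
  define l0 where "l0 = (l1 + L2) / 2"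
  have l0: "l1 < l0" "l0 < L2" "0 < l0" using l12 E1(1) unfolding l0_def by auto
  define P where "P = (\<lambda>n. fst (skew_iter p q n))"
  define Q where "Q = (\<lambda>n. snd (skew_iter p q n))"
  have PS: "P (Suc n) = bcomp (embed_z p) (P n) (Q n)" and QS: "Q (Suc n) = bcomp q (P n) (Q n)" for n
    unfolding P_def Q_def by (simp_all only: skew_Suc fst_conv snd_conv)
  have dpow: "1 \<le> \<delta> ^ n" for n using hdelta by simp
  have dnpow: "1 \<le> d ^ n" for n using d1 by simp
  have main: "(\<forall>i j. P n i j \<noteq> 0 \<longrightarrow> j = 0 \<and> \<delta> ^ n \<le> i) \<and> P n (\<delta> ^ n) 0 \<noteq> 0 \<and>
      Q n (g n) (d ^ n) \<noteq> 0 \<and> (\<forall>l. l1 \<le> l \<longrightarrow> l \<le> L2 \<longrightarrow> lb l (Q n) (real (g n) + l * real (d ^ n)))" for n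
  proof (induction n)
    case 0
    show ?case unfolding P_def Q_def g0 by (auto simp: zvar_def wvar_def lb_def phi_def)
  next
    case (Suc n)
    note IH = Suc.IH
    have ulbP: "ulb l (P n) (real (\<delta> ^ n)) (\<delta> ^ n) 0" if "0 \<le> l" for l
      unfolding ulb_def
    proof (intro conjI allI impI)
      show "phi l (\<delta> ^ n) 0 = real (\<delta> ^ n)" by (simp add: phi_def)
      fix i j assume "P n i j \<noteq> 0"
      then have "j = 0" "\<delta> ^ n \<le> i" using IH by blast+
      then show "i = \<delta> ^ n \<and> j = 0 \<or> real (\<delta> ^ n) < phi l i j"
        unfolding phi_def by (cases "i = \<delta> ^ n") (auto simp del: of_nat_power)
    qed
    have lbQ: "lb l (Q n) (real (g n) + l * real (d ^ n))" if "l1 \<le> l" "l \<le> L2" for l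
      using IH that by blast
    have ulbQ: "ulb l0 (Q n) (real (g n) + l0 * real (d ^ n)) (g n) (d ^ n)"
      unfolding ulb_def
    proof (intro conjI allI impI)
      show "phi l0 (g n) (d ^ n) = real (g n) + l0 * real (d ^ n)" by (simp add: phi_def)
      fix i j assume nz: "Q n i j \<noteq> 0"
      have h1: "0 \<le> (real i - real (g n)) + l1 * (real j - real (d ^ n))"
        using lbQ[of l1] l12 nz unfolding lb_def phi_def by (force simp: algebra_simps)
      have h2: "0 \<le> (real i - real (g n)) + L2 * (real j - real (d ^ n))"
        using lbQ[of L2] l12 nz unfolding lb_def phi_def by (force simp: algebra_simps)
      show "i = g n \<and> j = d ^ n \<or> real (g n) + l0 * real (d ^ n) < phi l0 i j"
      proof (cases "i = g n \<and> j = d ^ n")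
        case False
        then have "real i - real (g n) \<noteq> 0 \<or> real j - real (d ^ n) \<noteq> 0" by auto
        from hom_strict[of 1 l1 l0 L2, OF _ _ _ h1 h2 this] l0
        show ?thesis unfolding phi_def by (simp add: algebra_simps)
      qed simp
    qed
    have c1: "1 \<le> \<delta> ^ n + 0" using dpow by simp
    have c2: "1 \<le> g n + d ^ n" using dnpow[of n] by simp
    have zP: "zonly (P (Suc n))" unfolding PS using IH by (intro zonly_embed_comp) (simp add: zonly_def)
    have lbPS: "lb l0 (P (Suc n)) (real (\<delta> ^ Suc n))" unfolding PS
    proof (rule bcomp_lb[OF ulb_lb[OF ulbP] ulb_lb[OF ulbQ]])
      show "0 \<le> l0" using l0 by simp
      show "\<forall>i j. embed_z p i j \<noteq> 0 \<longrightarrow> real (\<delta> ^ Suc n) \<le> real i * real (\<delta> ^ n) + real j * (real (g n) + l0 * real (d ^ n))"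
      proof (intro allI impI)
        fix i j assume "embed_z p i j \<noteq> 0"
        then have "j = 0" "\<delta> \<le> i" using hplow unfolding embed_z_def by (metis not_le)+
        then show "real (\<delta> ^ Suc n) \<le> real i * real (\<delta> ^ n) + real j * (real (g n) + l0 * real (d ^ n))"
          by (simp add: mult_right_mono)
      qed
    qed
    have PSlead: "P (Suc n) (\<delta> ^ Suc n) 0 \<noteq> 0"
    proof -
      have "bcomp (embed_z p) (P n) (Q n) (\<delta> * \<delta> ^ n + 0 * g n) (\<delta> * 0 + 0 * d ^ n)
           = embed_z p \<delta> 0 * P n (\<delta> ^ n) 0 ^ \<delta> * Q n (g n) (d ^ n) ^ 0"
      proof (rule bcomp_lead[OF ulbP ulbQ c1 c2])
        show "0 \<le> l0" using l0 by simp
        show "\<forall>i j. embed_z p i j \<noteq> 0 \<longrightarrow> i = \<delta> \<and> j = 0 \<or>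
          real \<delta> * real (\<delta> ^ n) + real 0 * (real (g n) + l0 * real (d ^ n))
          < real i * real (\<delta> ^ n) + real j * (real (g n) + l0 * real (d ^ n))"
        proof (intro allI impI)
          fix i j assume "embed_z p i j \<noteq> 0"
          then have "j = 0" "\<delta> \<le> i" using hplow unfolding embed_z_def by (metis not_le)+
          then show "i = \<delta> \<and> j = 0 \<or> real \<delta> * real (\<delta> ^ n) + real 0 * (real (g n) + l0 * real (d ^ n))
            < real i * real (\<delta> ^ n) + real j * (real (g n) + l0 * real (d ^ n))"
          proof (cases "i = \<delta>")
            case False
            then have "real \<delta> < real i" using \<open>\<delta> \<le> i\<close> by simp
            moreover have "0 < real \<delta> ^ n" using hdelta by simp
            ultimately have "real \<delta> * real \<delta> ^ n < real i * real \<delta> ^ n" by (rule mult_strict_right_mono)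
            then show ?thesis using \<open>j = 0\<close> by simp
          qed (use \<open>j = 0\<close> in simp)
        qed
      qed
      then show ?thesis unfolding PS using hpd IH by (simp add: embed_z_def)
    qed
    have PSsupp: "\<forall>i j. P (Suc n) i j \<noteq> 0 \<longrightarrow> j = 0 \<and> \<delta> ^ Suc n \<le> i"
    proof (intro allI impI)
      fix i j assume nz: "P (Suc n) i j \<noteq> 0"
      then have j0: "j = 0" using zP unfolding zonly_def by blast
      have "real (\<delta> ^ Suc n) \<le> phi l0 i j" using lbPS nz unfolding lb_def by blast
      then have "real (\<delta> ^ Suc n) \<le> real i" using j0 unfolding phi_def by simp
      then have "\<delta> ^ Suc n \<le> i" by (simp only: of_nat_le_iff)
      then show "j = 0 \<and> \<delta> ^ Suc n \<le> i" using j0 by simp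
    qed
    have lbQS: "lb l (Q (Suc n)) (real (g (Suc n)) + l * real (d ^ Suc n))" if "l1 \<le> l" "l \<le> L2" for l
      unfolding QS
    proof (rule bcomp_lb[OF ulb_lb[OF ulbP] lbQ[OF that]])
      show "0 \<le> l" using that E1(1) by simp
      show "\<forall>i j. q i j \<noteq> 0 \<longrightarrow> real (g (Suc n)) + l * real (d ^ Suc n)
          \<le> real i * real (\<delta> ^ n) + real j * (real (g n) + l * real (d ^ n))"
      proof (intro allI impI)
        fix i j assume nz: "q i j \<noteq> 0"
        have h1: "0 \<le> (real i - real \<gamma>) + l1 * (real j - real d)" using G1 nz by (force simp: algebra_simps)
        have h2: "0 \<le> (real i - real \<gamma>) + L2 * (real j - real d)" using G2 nz by (force simp: algebra_simps)
        have "0 \<le> (real i - real \<gamma>) * real \<delta> ^ n + (real j - real d) * (real (g n) + l * real (d ^ n))"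
          using intv[OF that, of n] hdelta by (intro hom_ineq[OF _ _ _ h1 h2]) auto
        then show "real (g (Suc n)) + l * real (d ^ Suc n)
          \<le> real i * real (\<delta> ^ n) + real j * (real (g n) + l * real (d ^ n))"
          unfolding gsucr by (simp add: algebra_simps)
      qed
    qed
    have QSlead: "Q (Suc n) (g (Suc n)) (d ^ Suc n) \<noteq> 0"
    proof -
      have "bcomp q (P n) (Q n) (\<gamma> * \<delta> ^ n + d * g n) (\<gamma> * 0 + d * d ^ n)
           = q \<gamma> d * P n (\<delta> ^ n) 0 ^ \<gamma> * Q n (g n) (d ^ n) ^ d"
      proof (rule bcomp_lead[OF ulbP ulbQ c1 c2])
        show "0 \<le> l0" using l0 by simp
        show "\<forall>i j. q i j \<noteq> 0 \<longrightarrow> i = \<gamma> \<and> j = d \<or>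
          real \<gamma> * real (\<delta> ^ n) + real d * (real (g n) + l0 * real (d ^ n))
          < real i * real (\<delta> ^ n) + real j * (real (g n) + l0 * real (d ^ n))"
        proof (intro allI impI)
          fix i j assume nz: "q i j \<noteq> 0"
          show "i = \<gamma> \<and> j = d \<or> real \<gamma> * real (\<delta> ^ n) + real d * (real (g n) + l0 * real (d ^ n))
            < real i * real (\<delta> ^ n) + real j * (real (g n) + l0 * real (d ^ n))"
          proof (cases "i = \<gamma> \<and> j = d")
            case False
            have h1: "0 \<le> (real i - real \<gamma>) + l1 * (real j - real d)" using G1 nz by (force simp: algebra_simps)
            have h2: "0 \<le> (real i - real \<gamma>) + L2 * (real j - real d)" using G2 nz by (force simp: algebra_simps)
            have ne: "real i - real \<gamma> \<noteq> 0 \<or> real j - real d \<noteq> 0" using False by auto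
            have "0 < (real i - real \<gamma>) * real \<delta> ^ n + (real j - real d) * (real (g n) + l0 * real (d ^ n))"
              using intvs[OF l0(1,2), of n] hdelta by (intro hom_strict[OF _ _ _ h1 h2 ne]) auto
            then show ?thesis by (simp add: algebra_simps)
          qed simp
        qed
      qed
      then show ?thesis unfolding QS gsuc using qgd IH by simp
    qed
    show ?case using PSsupp PSlead QSlead lbQS by blast
  qed
  show ?thesis
  proof (intro allI impI)
    fix n :: nat assume "1 \<le> n"
    have gn: "\<gamma> * (\<Sum>i<n. \<delta> ^ (n - 1 - i) * d ^ i) = g n" unfolding g_def by simp
    have nz: "Q n (g n) (d ^ n) \<noteq> 0" using main by blast
    have lbn: "real (g n) + l * real (d ^ n) \<le> real i + l * real j" if "l1 \<le> l" "l \<le> L2" "Q n i j \<noteq> 0" for l i j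
      using main[of n] that unfolding lb_def phi_def by blast
    have extn: "(real (g n), real (d ^ n)) extreme_point_of newton_polygon (Q n)"
      by (rule point_extreme[of "Q n" "g n" "d ^ n" l1 L2, OF nz _ l12]) (use E1(1) l12 lbn in auto)
    have wt: "weight l (Q n) = weight l (monom (g n) (d ^ n)) \<and>
              weight l (monom (g n) (d ^ n)) = real (g n) + l * real (d ^ n)" if "l \<in> {l1..l1 + l2}" for l
    proof -
      have l: "l1 \<le> l" "l \<le> L2" using that unfolding L2_def by auto
      have w1: "weight l (Q n) = real (g n) + l * real (d ^ n)" unfolding weight_def
      proof (rule cInf_eq_minimum)
        show "real (g n) + l * real (d ^ n) \<in> {real i + l * real j |i j. Q n i j \<noteq> 0}"
          using nz by blast
      qed (use lbn[OF l] in auto)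
      have w2: "weight l (monom (g n) (d ^ n)) = real (g n) + l * real (d ^ n)" unfolding weight_def
        by (rule cInf_eq_minimum) (auto simp: monom_def split: if_splits)
      show ?thesis using w1 w2 by simp
    qed
    show "let Qn = snd (skew_iter p q n); gn = \<gamma> * (\<Sum>i<n. \<delta> ^ (n - 1 - i) * d ^ i)
               in Qn gn (d ^ n) \<noteq> 0
                  \<and> (real gn, real (d ^ n)) extreme_point_of newton_polygon Qn
                  \<and> (\<forall>l\<in>{l1..l1 + l2}. weight l Qn = weight l (monom gn (d ^ n))
                        \<and> weight l (monom gn (d ^ n)) = real gn + l * real (d ^ n))"
      unfolding Let_def gn using nz extn wt unfolding Q_def by blast
  qed
qed

end
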